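(* Let $A$ with projections $\pi_B:A\to B$, $\pi_C:A\to C$ be a pullback in $\mathbf{Sets}$ of $f_1:B\to D$ and $g_1:C\to D$, where $g_1$ is injective. Then $\mathcal{PP}_a(A)$ with $\mathcal{PP}_a(\pi_B),\mathcal{PP}_a(\pi_C)$ is a pullback of $\mathcal{PP}_a(f_1)$ and $\mathcal{PP}_a(g_1)$ in $\mathbf{Sets}$.
   Context: For a set $M$ whose elements are treated as atoms (urelements, distinct from every set built below), let $S_0=M$, $S_{n+1}=S_n\cup\mathcal{P}(S_n)$, and $\mathcal{PP}_a(M)=\bigcup_{n\ge 0}S_n$. For $f:M\to N$, $\mathcal{PP}_a(f)$ is defined recursively by $\mathcal{PP}_a(f)(x)=f(x)$ for $x\in M$ and $\mathcal{PP}_a(f)(x)=\{\mathcal{PP}_a(f)(x')\mid x'\in x\}$ otherwise; this makes $\mathcal{PP}_a$ a functor $\mathbf{Sets}\to\mathbf{Sets}$. *)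

theory Defs
  imports Main
begin

text \<open>
  A HOL type cannot contain PP_a(M) for infinite M (its cardinality is beth_omega(|M|)).
  We therefore work inside an arbitrary universe type 'u equipped with a set-former
  mk :: 'u set => 'u; atoms are elements of 'u.  The hypothesis urelem_encoding mk M
  says that mk is injective on the subsets of PP_a(M) and that built sets are distinct
  from the atoms of M, so that the encoded PP_a(M) is an exact copy of the paper's one.
\<close>

primrec lev :: "('u set \<Rightarrow> 'u) \<Rightarrow> 'u set \<Rightarrow> nat \<Rightarrow> 'u set" where
  "lev mk M 0 = M"
| "lev mk M (Suc n) = lev mk M n \<union> mk ` Pow (lev mk M n)"

definition PPa :: "('u set \<Rightarrow> 'u) \<Rightarrow> 'u set \<Rightarrow> 'u set" where
  "PPa mk M = (\<Union>n. lev mk M n)"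

definition urelem_encoding :: "('u set \<Rightarrow> 'u) \<Rightarrow> 'u set \<Rightarrow> bool" where
  "urelem_encoding mk M \<longleftrightarrow>
     inj_on mk (Pow (PPa mk M)) \<and> M \<inter> mk ` Pow (PPa mk M) = {}"

primrec PPmap_lev :: "('u set \<Rightarrow> 'u) \<Rightarrow> 'u set \<Rightarrow> ('u \<Rightarrow> 'u) \<Rightarrow> nat \<Rightarrow> 'u \<Rightarrow> 'u" where
  "PPmap_lev mk M f 0 y = f y"
| "PPmap_lev mk M f (Suc n) y =
     (if y \<in> lev mk M n then PPmap_lev mk M f n y
      else mk (PPmap_lev mk M f n ` inv_into (Pow (lev mk M n)) mk y))"

definition PPmap :: "('u set \<Rightarrow> 'u) \<Rightarrow> 'u set \<Rightarrow> ('u \<Rightarrow> 'u) \<Rightarrow> 'u \<Rightarrow> 'u" where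
  "PPmap mk M f y = PPmap_lev mk M f (LEAST n. y \<in> lev mk M n) y"

definition is_pullback ::
  "'a set \<Rightarrow> ('a \<Rightarrow> 'b) \<Rightarrow> ('a \<Rightarrow> 'c) \<Rightarrow> 'b set \<Rightarrow> 'c set \<Rightarrow> 'd set
     \<Rightarrow> ('b \<Rightarrow> 'd) \<Rightarrow> ('c \<Rightarrow> 'd) \<Rightarrow> bool" where
  "is_pullback A pB pC B C D f g \<longleftrightarrow>
     (\<forall>a\<in>A. pB a \<in> B) \<and> (\<forall>a\<in>A. pC a \<in> C) \<and>
     (\<forall>b\<in>B. f b \<in> D) \<and> (\<forall>c\<in>C. g c \<in> D) \<and>
     (\<forall>a\<in>A. f (pB a) = g (pC a)) \<and>
     (\<forall>b\<in>B. \<forall>c\<in>C. f b = g c \<longrightarrow> (\<exists>!a. a \<in> A \<and> pB a = b \<and> pC a = c))"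

end

theory Submission
  imports Defs
begin

lemma lev_mono: "m \<le> n \<Longrightarrow> lev mk M m \<subseteq> lev mk M n"
  by (induction rule: dec_induct) auto

lemma lev_PPa: "lev mk M n \<subseteq> PPa mk M"
  unfolding PPa_def by blast

lemma lev_sub_PPa: "S \<subseteq> lev mk M n \<Longrightarrow> S \<subseteq> PPa mk M"
proof -
  assume "S \<subseteq> lev mk M n"
  then show ?thesis using lev_PPa[of mk M n] by (rule order_trans)
qed

lemma PPa_lev: "x \<in> PPa mk M \<Longrightarrow> \<exists>n. x \<in> lev mk M n"
  by (auto simp: PPa_def)

lemma M_PPa: "M \<subseteq> PPa mk M"
  using lev_PPa[of mk M 0] by simp

lemma lev_Suc_cases: "x \<in> lev mk M (Suc n) \<Longrightarrow> x \<in> M \<or> (\<exists>S. S \<subseteq> lev mk M n \<and> x = mk S)"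
proof (induction n arbitrary: x)
  case 0 thus ?case by auto
next
  case (Suc n)
  then show ?case using lev_mono[of n "Suc n" mk M] by auto
qed

lemma mk_PPa: "S \<subseteq> lev mk M n \<Longrightarrow> mk S \<in> PPa mk M"
  using lev_PPa[of mk M "Suc n"] by auto

lemma PPa_cases:
  assumes "x \<in> PPa mk M" "x \<in> M \<Longrightarrow> P" "\<And>n S. S \<subseteq> lev mk M n \<Longrightarrow> x = mk S \<Longrightarrow> P"
  shows P
proof -
  obtain n where n: "x \<in> lev mk M n" using PPa_lev[OF assms(1)] by blast
  show P
  proof (cases n)
    case 0 then show ?thesis using n assms(2) by simp
  next
    case (Suc m) then show ?thesis using n lev_Suc_cases[of x mk M m] assms(2,3) by blast
  qed
qed

lemma PPa_induct:
  assumes "x \<in> PPa mk M" "\<And>x. x \<in> M \<Longrightarrow> P x"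
    "\<And>S n. S \<subseteq> lev mk M n \<Longrightarrow> \<forall>s\<in>S. P s \<Longrightarrow> P (mk S)"
  shows "P x"
proof -
  have "\<forall>x\<in>lev mk M n. P x" for n
  proof (induction n)
    case 0 show ?case
    proof
      fix x assume "x \<in> lev mk M 0"
      then have "x \<in> M" by simp
      then show "P x" by (rule assms(2))
    qed
  next
    case (Suc n)
    show ?case
    proof
      fix x assume "x \<in> lev mk M (Suc n)"
      then have "x \<in> M \<or> (\<exists>S. S \<subseteq> lev mk M n \<and> x = mk S)" by (rule lev_Suc_cases)
      then consider "x \<in> M" | S where "S \<subseteq> lev mk M n" "x = mk S" by blast
      then show "P x"
      proof cases
        case 1 then show ?thesis using assms(2) by blast
      next
        case 2 then show ?thesis using assms(3)[of S n] Suc.IH by blast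
      qed
    qed
  qed
  then show ?thesis using PPa_lev[OF assms(1)] by blast
qed

lemma enc_notin: "urelem_encoding mk M \<Longrightarrow> S \<subseteq> lev mk M n \<Longrightarrow> mk S \<notin> M"
  using lev_PPa[of mk M n] unfolding urelem_encoding_def by blast

lemma enc_inj: "urelem_encoding mk M \<Longrightarrow> S \<subseteq> PPa mk M \<Longrightarrow> T \<subseteq> PPa mk M \<Longrightarrow> mk S = mk T \<Longrightarrow> S = T"
  by (auto simp: urelem_encoding_def inj_on_def)

lemma PPmap_lev_stable:
  assumes "y \<in> lev mk M n" "n \<le> m"
  shows "PPmap_lev mk M f m y = PPmap_lev mk M f n y"
  using assms(2)
proof (induction m rule: dec_induct)
  case base then show ?case by simp
next
  case (step k)
  then have "y \<in> lev mk M k" using lev_mono[of n k mk M] assms(1) by auto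
  then show ?case using step by simp
qed

lemma PPmap_eq_lev: "y \<in> lev mk M n \<Longrightarrow> PPmap mk M f y = PPmap_lev mk M f n y"
proof -
  assume y: "y \<in> lev mk M n"
  define k where "k = (LEAST n. y \<in> lev mk M n)"
  have kn: "k \<le> n" unfolding k_def using y by (rule Least_le)
  have yk: "y \<in> lev mk M k" unfolding k_def using y by (rule LeastI)
  have "PPmap mk M f y = PPmap_lev mk M f k y" unfolding PPmap_def k_def by simp
  also have "\<dots> = PPmap_lev mk M f n y" using PPmap_lev_stable[OF yk kn] by simp
  finally show ?thesis .
qed

lemma PPmap_atom: "y \<in> M \<Longrightarrow> PPmap mk M f y = f y"
  using PPmap_eq_lev[of y mk M 0] by simp

lemma PPmap_mk:
  assumes enc: "urelem_encoding mk M" and S: "S \<subseteq> lev mk M n"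
  shows "PPmap mk M f (mk S) = mk (PPmap mk M f ` S)"
proof -
  define k where "k = (LEAST j. mk S \<in> lev mk M j)"
  have ex: "mk S \<in> lev mk M (Suc n)" using S by auto
  have kin: "mk S \<in> lev mk M k" unfolding k_def using ex by (rule LeastI)
  have "k \<noteq> 0"
  proof
    assume "k = 0" then have "mk S \<in> M" using kin by simp
    with enc_notin[OF enc S] show False by blast
  qed
  then obtain j where kj: "k = Suc j" by (cases k) auto
  have nj: "mk S \<notin> lev mk M j"
  proof
    assume "mk S \<in> lev mk M j" then have "k \<le> j" unfolding k_def by (rule Least_le)
    with kj show False by simp
  qed
  from kin kj nj obtain T where T: "T \<subseteq> lev mk M j" "mk S = mk T" by auto
  have ST: "S = T" using enc_inj[OF enc lev_sub_PPa[OF S] lev_sub_PPa[OF T(1)] T(2)] .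
  have "Pow (lev mk M j) \<subseteq> Pow (PPa mk M)" using lev_PPa[of mk M j] by (rule Pow_mono)
  then have inj: "inj_on mk (Pow (lev mk M j))" using enc unfolding urelem_encoding_def
    using inj_on_subset by blast
  have "PPmap mk M f (mk S) = PPmap_lev mk M f k (mk S)" by (rule PPmap_eq_lev[OF kin])
  also have "\<dots> = mk (PPmap_lev mk M f j ` S)" using kj nj inv_into_f_f[OF inj, of S] T ST by simp
  also have "PPmap_lev mk M f j ` S = PPmap mk M f ` S"
  proof (rule image_cong)
    fix x assume "x \<in> S"
    then have "x \<in> lev mk M j" using T ST by blast
    then show "PPmap_lev mk M f j x = PPmap mk M f x" by (rule PPmap_eq_lev[symmetric])
  qed simp
  finally show ?thesis .
qed

lemma PPmap_into:
  assumes enc: "urelem_encoding mk M" and f: "f ` M \<subseteq> N"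
  shows "x \<in> lev mk M n \<Longrightarrow> PPmap mk M f x \<in> lev mk N n"
proof (induction n arbitrary: x)
  case 0 then show ?case using f PPmap_atom[of x M mk f] by auto
next
  case (Suc n)
  from lev_Suc_cases[OF Suc.prems] show ?case
  proof
    assume "x \<in> M" then show ?case using f PPmap_atom[of x M mk f] lev_mono[of 0 "Suc n" mk N] by auto
  next
    assume "\<exists>S. S \<subseteq> lev mk M n \<and> x = mk S"
    then obtain S where S: "S \<subseteq> lev mk M n" "x = mk S" by blast
    have "PPmap mk M f ` S \<subseteq> lev mk N n" using Suc.IH S(1) by blast
    then show ?case using PPmap_mk[OF enc S(1)] S(2) by simp
  qed
qed

lemma PPmap_into_PPa:
  assumes "urelem_encoding mk M" "f ` M \<subseteq> N" "x \<in> PPa mk M"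
  shows "PPmap mk M f x \<in> PPa mk N"
proof -
  obtain n where "x \<in> lev mk M n" using PPa_lev[OF assms(3)] by blast
  then have "PPmap mk M f x \<in> lev mk N n" by (rule PPmap_into[OF assms(1,2)])
  then show ?thesis by (rule subsetD[OF lev_PPa[of mk N n]])
qed

lemma PPmap_cong:
  assumes enc: "urelem_encoding mk M" and fg: "\<forall>x\<in>M. f x = g x" and x: "x \<in> PPa mk M"
  shows "PPmap mk M f x = PPmap mk M g x"
  using x
proof (rule PPa_induct)
  fix x assume "x \<in> M" then show "PPmap mk M f x = PPmap mk M g x" using fg by (simp add: PPmap_atom)
next
  fix S n assume "S \<subseteq> lev mk M n" "\<forall>s\<in>S. PPmap mk M f s = PPmap mk M g s"
  then show "PPmap mk M f (mk S) = PPmap mk M g (mk S)" using PPmap_mk[OF enc] by simp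
qed

lemma PPmap_comp:
  assumes encM: "urelem_encoding mk M" and encN: "urelem_encoding mk N" and f: "f ` M \<subseteq> N"
    and x: "x \<in> PPa mk M"
  shows "PPmap mk N g (PPmap mk M f x) = PPmap mk M (g \<circ> f) x"
  using x
proof (rule PPa_induct)
  fix x assume "x \<in> M" then show "PPmap mk N g (PPmap mk M f x) = PPmap mk M (g \<circ> f) x"
    using f by (auto simp add: PPmap_atom)
next
  fix S n assume S: "S \<subseteq> lev mk M n" and IH: "\<forall>s\<in>S. PPmap mk N g (PPmap mk M f s) = PPmap mk M (g \<circ> f) s"
  have S': "PPmap mk M f ` S \<subseteq> lev mk N n" using PPmap_into[OF encM f] S by blast
  have "PPmap mk N g (PPmap mk M f (mk S)) = mk (PPmap mk N g ` PPmap mk M f ` S)"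
    using PPmap_mk[OF encM S] PPmap_mk[OF encN S'] by simp
  also have "PPmap mk N g ` PPmap mk M f ` S = PPmap mk M (g \<circ> f) ` S"
    using IH by (force simp: image_image)
  finally show "PPmap mk N g (PPmap mk M f (mk S)) = PPmap mk M (g \<circ> f) (mk S)"
    using PPmap_mk[OF encM S] by simp
qed

lemma PPmap_inj:
  assumes encM: "urelem_encoding mk M" and encN: "urelem_encoding mk N" and g: "g ` M \<subseteq> N"
    and inj: "inj_on g M"
  shows "inj_on (PPmap mk M g) (PPa mk M)"
proof -
  have "\<forall>y\<in>PPa mk M. PPmap mk M g x = PPmap mk M g y \<longrightarrow> x = y" if x: "x \<in> PPa mk M" for x
    using x
  proof (rule PPa_induct)
    fix x assume xM: "x \<in> M"
    show "\<forall>y\<in>PPa mk M. PPmap mk M g x = PPmap mk M g y \<longrightarrow> x = y"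
    proof (intro ballI impI)
      fix y assume y: "y \<in> PPa mk M" and eq: "PPmap mk M g x = PPmap mk M g y"
      show "x = y"
      proof (rule PPa_cases[OF y])
        assume "y \<in> M" then show ?thesis using xM eq inj by (simp add: PPmap_atom inj_on_def)
      next
        fix n T assume T: "T \<subseteq> lev mk M n" "y = mk T"
        have "PPmap mk M g ` T \<subseteq> lev mk N n" using PPmap_into[OF encM g] T by blast
        then have "PPmap mk M g y \<notin> N" using enc_notin[OF encN] PPmap_mk[OF encM T(1)] T by simp
        then show ?thesis using eq xM g by (auto simp: PPmap_atom)
      qed
    qed
  next
    fix S n assume S: "S \<subseteq> lev mk M n"
      and IH: "\<forall>s\<in>S. \<forall>y\<in>PPa mk M. PPmap mk M g s = PPmap mk M g y \<longrightarrow> s = y"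
    show "\<forall>y\<in>PPa mk M. PPmap mk M g (mk S) = PPmap mk M g y \<longrightarrow> mk S = y"
    proof (intro ballI impI)
      fix y assume y: "y \<in> PPa mk M" and eq: "PPmap mk M g (mk S) = PPmap mk M g y"
      have S': "PPmap mk M g ` S \<subseteq> lev mk N n" using PPmap_into[OF encM g] S by blast
      show "mk S = y"
      proof (rule PPa_cases[OF y])
        assume yM: "y \<in> M"
        have "PPmap mk M g (mk S) \<notin> N" using enc_notin[OF encN S'] PPmap_mk[OF encM S] by simp
        then show ?thesis using eq yM g by (auto simp: PPmap_atom)
      next
        fix m T assume T: "T \<subseteq> lev mk M m" "y = mk T"
        have T': "PPmap mk M g ` T \<subseteq> lev mk N m" using PPmap_into[OF encM g] T by blast
        have "mk (PPmap mk M g ` S) = mk (PPmap mk M g ` T)"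
          by (metis eq T(2) PPmap_mk[OF encM S] PPmap_mk[OF encM T(1)])
        then have im: "PPmap mk M g ` S = PPmap mk M g ` T"
          using enc_inj[OF encN lev_sub_PPa[OF S'] lev_sub_PPa[OF T']] by blast
        have TP: "T \<subseteq> PPa mk M" using lev_sub_PPa[OF T(1)] .
        have SP: "S \<subseteq> PPa mk M" using lev_sub_PPa[OF S(1)] .
        have "S = T"
        proof
          show "S \<subseteq> T"
          proof
            fix s assume s: "s \<in> S"
            then obtain t where "t \<in> T" "PPmap mk M g s = PPmap mk M g t" using im by blast
            then show "s \<in> T" using IH s TP by blast
          qed
        next
          show "T \<subseteq> S"
          proof
            fix t assume t: "t \<in> T"
            then obtain s where "s \<in> S" "PPmap mk M g s = PPmap mk M g t" using im by (metis imageE imageI)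
            then show "t \<in> S" using IH t TP by blast
          qed
        qed
        then show ?thesis using T by simp
      qed
    qed
  qed
  then show ?thesis unfolding inj_on_def by blast
qed

lemma PPmap_reflect:
  assumes encM: "urelem_encoding mk M" and encN: "urelem_encoding mk N" and f: "f ` M \<subseteq> N"
    and x: "x \<in> PPa mk M"
  shows "PPmap mk M f x \<in> lev mk N n \<Longrightarrow> x \<in> lev mk M n"
proof -
  have "\<forall>n. PPmap mk M f x \<in> lev mk N n \<longrightarrow> x \<in> lev mk M n"
    using x
  proof (rule PPa_induct)
    fix x assume "x \<in> M" then show "\<forall>n. PPmap mk M f x \<in> lev mk N n \<longrightarrow> x \<in> lev mk M n"
      using lev_mono[of 0 _ mk M] by auto
  next
    fix S k assume S: "S \<subseteq> lev mk M k"
      and IH: "\<forall>s\<in>S. \<forall>n. PPmap mk M f s \<in> lev mk N n \<longrightarrow> s \<in> lev mk M n"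
    have S': "PPmap mk M f ` S \<subseteq> lev mk N k" using PPmap_into[OF encM f] S by blast
    show "\<forall>n. PPmap mk M f (mk S) \<in> lev mk N n \<longrightarrow> mk S \<in> lev mk M n"
    proof (intro allI impI)
      fix n assume h: "PPmap mk M f (mk S) \<in> lev mk N n"
      then have h': "mk (PPmap mk M f ` S) \<in> lev mk N n" using PPmap_mk[OF encM S] by simp
      have nN: "mk (PPmap mk M f ` S) \<notin> N" using enc_notin[OF encN S'] .
      show "mk S \<in> lev mk M n"
      proof (cases n)
        case 0 then show ?thesis using h' nN by simp
      next
        case (Suc m)
        then obtain U where U: "U \<subseteq> lev mk N m" "mk (PPmap mk M f ` S) = mk U"
          using lev_Suc_cases[of _ mk N m] h' nN by blast
        from U(2) have "PPmap mk M f ` S = U"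
          by (rule enc_inj[OF encN lev_sub_PPa[OF S'] lev_sub_PPa[OF U(1)]])
        then have "S \<subseteq> lev mk M m" using IH U by blast
        then show ?thesis using Suc by simp
      qed
    qed
  qed
  then show "PPmap mk M f x \<in> lev mk N n \<Longrightarrow> x \<in> lev mk M n" by blast
qed

theorem mainTheorem4:
  fixes mk :: "'u set \<Rightarrow> 'u"
    and A B C D :: "'u set"
    and pB pC f1 g1 :: "'u \<Rightarrow> 'u"
  assumes "urelem_encoding mk A" and "urelem_encoding mk B"
    and "urelem_encoding mk C" and "urelem_encoding mk D"
    and "is_pullback A pB pC B C D f1 g1"
    and "inj_on g1 C"
  shows "is_pullback (PPa mk A) (PPmap mk A pB) (PPmap mk A pC)
           (PPa mk B) (PPa mk C) (PPa mk D) (PPmap mk B f1) (PPmap mk C g1)"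
proof -
  note encA = assms(1) and encB = assms(2) and encC = assms(3) and encD = assms(4)
  have hB: "pB ` A \<subseteq> B" and hC: "pC ` A \<subseteq> C" and hf: "f1 ` B \<subseteq> D" and hg: "g1 ` C \<subseteq> D"
    and comm: "\<forall>a\<in>A. f1 (pB a) = g1 (pC a)"
    and pu: "\<forall>b\<in>B. \<forall>c\<in>C. f1 b = g1 c \<longrightarrow> (\<exists>!a. a \<in> A \<and> pB a = b \<and> pC a = c)"
    using assms(5) unfolding is_pullback_def by auto
  define PB where "PB = PPmap mk A pB"
  define PC where "PC = PPmap mk A pC"
  define F where "F = PPmap mk B f1"
  define G where "G = PPmap mk C g1"
  have intoB: "x \<in> PPa mk A \<Longrightarrow> PB x \<in> PPa mk B" for x
    unfolding PB_def using PPmap_into_PPa[OF encA hB] .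
  have intoC: "x \<in> PPa mk A \<Longrightarrow> PC x \<in> PPa mk C" for x
    unfolding PC_def using PPmap_into_PPa[OF encA hC] .
  have intoDf: "x \<in> PPa mk B \<Longrightarrow> F x \<in> PPa mk D" for x
    unfolding F_def using PPmap_into_PPa[OF encB hf] .
  have intoDg: "x \<in> PPa mk C \<Longrightarrow> G x \<in> PPa mk D" for x
    unfolding G_def using PPmap_into_PPa[OF encC hg] .
  have commPP: "F (PB x) = G (PC x)" if x: "x \<in> PPa mk A" for x
  proof -
    have "F (PB x) = PPmap mk A (f1 \<circ> pB) x"
      unfolding F_def PB_def using PPmap_comp[OF encA encB hB x] .
    also have "\<dots> = PPmap mk A (g1 \<circ> pC) x"
      using PPmap_cong[OF encA _ x] comm by simp
    also have "\<dots> = G (PC x)"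
      unfolding G_def PC_def using PPmap_comp[OF encA encC hC x] by simp
    finally show ?thesis .
  qed
  have injG: "inj_on G (PPa mk C)" unfolding G_def using PPmap_inj[OF encC encD hg assms(6)] .
  have key: "PC u = PC v" if "u \<in> PPa mk A" "v \<in> PPa mk A" "PB u = PB v" for u v
    using commPP[OF that(1)] commPP[OF that(2)] that(3) injG intoC[OF that(1)] intoC[OF that(2)]
    by (metis inj_onD)
  have uniq: "\<forall>x2\<in>PPa mk A. PB x1 = PB x2 \<longrightarrow> x1 = x2" if x1: "x1 \<in> PPa mk A" for x1
    using x1
  proof (rule PPa_induct)
    fix a1 assume a1: "a1 \<in> A"
    show "\<forall>x2\<in>PPa mk A. PB a1 = PB x2 \<longrightarrow> a1 = x2"
    proof (intro ballI impI)
      fix x2 assume x2: "x2 \<in> PPa mk A" and eq: "PB a1 = PB x2"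
      have eqC: "PC a1 = PC x2" using key[OF subsetD[OF M_PPa a1] x2 eq] .
      show "a1 = x2"
      proof (rule PPa_cases[OF x2])
        assume a2: "x2 \<in> A"
        have e1: "pB x2 = pB a1" "pC x2 = pC a1" using eq eqC a1 a2
          by (simp_all add: PB_def PC_def PPmap_atom)
        have b1: "pB a1 \<in> B" using a1 hB by blast
        have c1: "pC a1 \<in> C" using a1 hC by blast
        have "f1 (pB a1) = g1 (pC a1)" using a1 comm by blast
        then have ex1: "\<exists>!a. a \<in> A \<and> pB a = pB a1 \<and> pC a = pC a1"
          using pu b1 c1 by blast
        show ?thesis using ex1E[OF ex1] a1 a2 e1 by metis
      next
        fix n S assume S: "S \<subseteq> lev mk A n" "x2 = mk S"
        have S': "PB ` S \<subseteq> lev mk B n" unfolding PB_def using PPmap_into[OF encA hB] S by blast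
        have "PB x2 \<notin> B" using enc_notin[OF encB S'] PPmap_mk[OF encA S(1)] S unfolding PB_def by simp
        moreover have "PB a1 \<in> B" using a1 hB by (auto simp: PB_def PPmap_atom)
        ultimately show ?thesis using eq by simp
      qed
    qed
  next
    fix S1 n1 assume S1: "S1 \<subseteq> lev mk A n1"
      and IH: "\<forall>s\<in>S1. \<forall>x2\<in>PPa mk A. PB s = PB x2 \<longrightarrow> s = x2"
    have S1': "PB ` S1 \<subseteq> lev mk B n1" unfolding PB_def using PPmap_into[OF encA hB] S1 by blast
    have PB1: "PB (mk S1) = mk (PB ` S1)" unfolding PB_def using PPmap_mk[OF encA S1] .
    show "\<forall>x2\<in>PPa mk A. PB (mk S1) = PB x2 \<longrightarrow> mk S1 = x2"
    proof (intro ballI impI)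
      fix x2 assume x2: "x2 \<in> PPa mk A" and eq: "PB (mk S1) = PB x2"
      show "mk S1 = x2"
      proof (rule PPa_cases[OF x2])
        assume a2: "x2 \<in> A"
        have "PB (mk S1) \<notin> B" using enc_notin[OF encB S1'] PB1 by simp
        moreover have "PB x2 \<in> B" using a2 hB by (auto simp: PB_def PPmap_atom)
        ultimately show ?thesis using eq by simp
      next
        fix n2 S2 assume S2: "S2 \<subseteq> lev mk A n2" "x2 = mk S2"
        have S2': "PB ` S2 \<subseteq> lev mk B n2" unfolding PB_def using PPmap_into[OF encA hB] S2 by blast
        have PB2: "PB (mk S2) = mk (PB ` S2)" unfolding PB_def using PPmap_mk[OF encA S2(1)] .
        have im: "PB ` S1 = PB ` S2"
          using enc_inj[OF encB lev_sub_PPa[OF S1'] lev_sub_PPa[OF S2']] eq PB1 PB2 S2(2) by simp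
        have P2: "S2 \<subseteq> PPa mk A" using lev_sub_PPa[OF S2(1)] .
        have P1: "S1 \<subseteq> PPa mk A" using lev_sub_PPa[OF S1(1)] .
        have "S1 = S2"
        proof
          show "S1 \<subseteq> S2"
          proof
            fix s assume s: "s \<in> S1"
            then obtain t where "t \<in> S2" "PB s = PB t" using im by blast
            then show "s \<in> S2" using IH s P2 by blast
          qed
        next
          show "S2 \<subseteq> S1"
          proof
            fix t assume t: "t \<in> S2"
            then obtain s where "s \<in> S1" "PB s = PB t" using im by (metis imageE imageI)
            then show "t \<in> S1" using IH P2 t by blast
          qed
        qed
        then show ?thesis using S2 by simp
      qed
    qed
  qed
  have exist: "\<forall>z\<in>PPa mk C. F y = G z \<longrightarrow> (\<exists>x\<in>PPa mk A. PB x = y \<and> PC x = z)"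
    if y: "y \<in> PPa mk B" for y
    using y
  proof (rule PPa_induct)
    fix b assume b: "b \<in> B"
    show "\<forall>z\<in>PPa mk C. F b = G z \<longrightarrow> (\<exists>x\<in>PPa mk A. PB x = b \<and> PC x = z)"
    proof (intro ballI impI)
      fix z assume z: "z \<in> PPa mk C" and eq: "F b = G z"
      have Fb: "F b = f1 b" "f1 b \<in> D" using b hf by (auto simp: F_def PPmap_atom)
      show "\<exists>x\<in>PPa mk A. PB x = b \<and> PC x = z"
      proof (rule PPa_cases[OF z])
        assume c: "z \<in> C"
        have "f1 b = g1 z" using eq Fb c by (simp add: G_def PPmap_atom)
        then obtain a where a: "a \<in> A" "pB a = b" "pC a = z" using pu b c by metis
        have aP: "a \<in> PPa mk A" using subsetD[OF M_PPa a(1)] .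
        show ?thesis
          by (rule bexI[OF _ aP]) (use a in \<open>simp add: PB_def PC_def PPmap_atom\<close>)
      next
        fix n T assume T: "T \<subseteq> lev mk C n" "z = mk T"
        have T': "G ` T \<subseteq> lev mk D n" unfolding G_def using PPmap_into[OF encC hg] T by blast
        have "G z \<notin> D" using enc_notin[OF encD T'] PPmap_mk[OF encC T(1)] T unfolding G_def by simp
        then show ?thesis using eq Fb by simp
      qed
    qed
  next
    fix S n assume S: "S \<subseteq> lev mk B n"
      and IH: "\<forall>s\<in>S. \<forall>z\<in>PPa mk C. F s = G z \<longrightarrow> (\<exists>x\<in>PPa mk A. PB x = s \<and> PC x = z)"
    have S': "F ` S \<subseteq> lev mk D n" unfolding F_def using PPmap_into[OF encB hf] S by blast
    have FS: "F (mk S) = mk (F ` S)" unfolding F_def using PPmap_mk[OF encB S] .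
    show "\<forall>z\<in>PPa mk C. F (mk S) = G z \<longrightarrow> (\<exists>x\<in>PPa mk A. PB x = mk S \<and> PC x = z)"
    proof (intro ballI impI)
      fix z assume z: "z \<in> PPa mk C" and eq: "F (mk S) = G z"
      show "\<exists>x\<in>PPa mk A. PB x = mk S \<and> PC x = z"
      proof (rule PPa_cases[OF z])
        assume c: "z \<in> C"
        have "G z \<in> D" using c hg by (auto simp: G_def PPmap_atom)
        moreover have "F (mk S) \<notin> D" using enc_notin[OF encD S'] FS by simp
        ultimately show ?thesis using eq by simp
      next
        fix m T assume T: "T \<subseteq> lev mk C m" "z = mk T"
        have T': "G ` T \<subseteq> lev mk D m" unfolding G_def using PPmap_into[OF encC hg] T by blast
        have GT: "G (mk T) = mk (G ` T)" unfolding G_def using PPmap_mk[OF encC T(1)] .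
        have im: "F ` S = G ` T"
          using enc_inj[OF encD lev_sub_PPa[OF S'] lev_sub_PPa[OF T']] eq FS GT T(2) by simp
        have TP: "T \<subseteq> PPa mk C" using lev_sub_PPa[OF T(1)] .
        define X where "X = {x \<in> PPa mk A. PB x \<in> S \<and> PC x \<in> T}"
        have XS: "PB ` X = S"
        proof
          show "PB ` X \<subseteq> S" unfolding X_def by auto
        next
          show "S \<subseteq> PB ` X"
          proof
            fix s assume s: "s \<in> S"
            then obtain t where t: "t \<in> T" "F s = G t" using im by blast
            then obtain x where "x \<in> PPa mk A" "PB x = s" "PC x = t" using IH s TP by blast
            then show "s \<in> PB ` X" unfolding X_def using s t by blast
          qed
        qed
        have XT: "PC ` X = T"
        proof
          show "PC ` X \<subseteq> T" unfolding X_def by auto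
        next
          show "T \<subseteq> PC ` X"
          proof
            fix t assume t: "t \<in> T"
            then obtain s where s: "s \<in> S" "F s = G t" using im by (metis imageE imageI)
            then obtain x where "x \<in> PPa mk A" "PB x = s" "PC x = t" using IH t TP by blast
            then show "t \<in> PC ` X" unfolding X_def using s t by blast
          qed
        qed
        have Xlev: "X \<subseteq> lev mk A n"
        proof
          fix x assume x: "x \<in> X"
          then have "PB x \<in> lev mk B n" using S unfolding X_def by blast
          then show "x \<in> lev mk A n"
            using PPmap_reflect[OF encA encB hB, of x n] x unfolding X_def PB_def by blast
        qed
        have "PB (mk X) = mk S" unfolding PB_def using PPmap_mk[OF encA Xlev] XS PB_def by simp
        moreover have "PC (mk X) = z" unfolding PC_def using PPmap_mk[OF encA Xlev] XT PC_def T by simp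
        moreover have "mk X \<in> PPa mk A" using mk_PPa[OF Xlev] .
        ultimately show ?thesis by blast
      qed
    qed
  qed
  show ?thesis
    unfolding is_pullback_def
  proof (intro conjI ballI impI)
    fix a assume "a \<in> PPa mk A" then show "PPmap mk A pB a \<in> PPa mk B" using intoB PB_def by simp
  next
    fix a assume "a \<in> PPa mk A" then show "PPmap mk A pC a \<in> PPa mk C" using intoC PC_def by simp
  next
    fix b assume "b \<in> PPa mk B" then show "PPmap mk B f1 b \<in> PPa mk D" using intoDf F_def by simp
  next
    fix c assume "c \<in> PPa mk C" then show "PPmap mk C g1 c \<in> PPa mk D" using intoDg G_def by simp
  next
    fix a assume "a \<in> PPa mk A" then show "PPmap mk B f1 (PPmap mk A pB a) = PPmap mk C g1 (PPmap mk A pC a)"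
      using commPP F_def G_def PB_def PC_def by simp
  next
    fix b c assume b: "b \<in> PPa mk B" and c: "c \<in> PPa mk C" and eq: "PPmap mk B f1 b = PPmap mk C g1 c"
    obtain x where x: "x \<in> PPa mk A" "PB x = b" "PC x = c"
      using exist[OF b] c eq F_def G_def by blast
    show "\<exists>!a. a \<in> PPa mk A \<and> PPmap mk A pB a = b \<and> PPmap mk A pC a = c"
    proof (rule ex1I[of _ x])
      show "x \<in> PPa mk A \<and> PPmap mk A pB x = b \<and> PPmap mk A pC x = c" using x PB_def PC_def by simp
    next
      fix a assume "a \<in> PPa mk A \<and> PPmap mk A pB a = b \<and> PPmap mk A pC a = c"
      then show "a = x" using uniq[OF x(1)] x PB_def by metis
    qed
  qed
qed

end
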